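(* A partial function $f$ on $\{0,1\}^n$ is not submodular-extendable if and only if $f$ contains a path certificate.
   Context: Identify $\{0,1\}^n$ with subsets of $[n]$; the hypercube graph has edges $(S,S+i)$ for $i\notin S$. A partial function $f$ is a real-valued function on a subset $\mathcal{D}=\mathrm{D}(f)\subseteq\{0,1\}^n$; it is submodular-extendable if some submodular $g:2^{[n]}\to\mathbb{R}$ (i.e. $g(S+i)-g(S)\ge g(T+i)-g(T)$ whenever $S\subseteq T$, $i\notin T$) agrees with $f$ on $\mathcal{D}$. For hypercube edges $e=(S,S+i)$ and $e'=(T,T+j)$ write $e\preceq e'$ if $i=j$ and $S\subseteq T$. Consider a finite collection $\mathbf{P}$ of directed paths in the hypercube graph, each being either a directed cycle or a directed path whose two endpoints lie in $\mathcal{D}$. A traversed edge is upward if it is traversed from the smaller set to the larger and downward otherwise. Let $\mathbf{U}$ (resp. $\mathbf{D}$) be the multiset of upward (resp. downward) edge traversals in $\mathbf{P}$, counted with multiplicity. $\mathbf{P}$ is matched if there is a perfect matching between $\mathbf{U}$ and $\mathbf{D}$ in which each upward edge $e$ is matched to a downward edge $e'$ with $e\preceq e'$. The value of a path from $S\in\mathcal{D}$ to $S'\in\mathcal{D}$ is $f(S')-f(S)$, cycles have value $0$, and the value of $\mathbf{P}$ is the sum of the values of its members. A path certificate for $f$ is a matched collection $\mathbf{P}$ of negative value. *)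

theory Defs
  imports Complex_Main "HOL-Library.Multiset"
begin

text \<open>Vertices of the hypercube {0,1}^n are subsets of {0..<n} (i.e. of [n], 0-indexed).
A partial function is a pair (D, f) with D a set of vertices and f :: nat set => real,
only the values of f on D being relevant.\<close>

definition submodular_on :: "nat \<Rightarrow> (nat set \<Rightarrow> real) \<Rightarrow> bool" where
  "submodular_on n g \<longleftrightarrow>
     (\<forall>S T i. S \<subseteq> T \<and> T \<subseteq> {..<n} \<and> i < n \<and> i \<notin> T \<longrightarrow>
        g (insert i S) - g S \<ge> g (insert i T) - g T)"

definition submodular_extendable :: "nat \<Rightarrow> nat set set \<Rightarrow> (nat set \<Rightarrow> real) \<Rightarrow> bool" where
  "submodular_extendable n D f \<longleftrightarrow>
     (\<exists>g. submodular_on n g \<and> (\<forall>S\<in>D. g S = f S))"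

text \<open>Hypercube edges (S, S+i), i notin S, are represented as pairs (lower set, upper set).\<close>

definition hc_adj :: "nat \<Rightarrow> nat set \<Rightarrow> nat set \<Rightarrow> bool" where
  "hc_adj n u v \<longleftrightarrow> u \<subseteq> {..<n} \<and> v \<subseteq> {..<n} \<and>
     (\<exists>i<n. (i \<notin> u \<and> v = insert i u) \<or> (i \<notin> v \<and> u = insert i v))"

definition hc_walk :: "nat \<Rightarrow> nat set list \<Rightarrow> bool" where
  "hc_walk n p \<longleftrightarrow> p \<noteq> [] \<and> set p \<subseteq> Pow {..<n} \<and>
     (\<forall>k. Suc k < length p \<longrightarrow> hc_adj n (p ! k) (p ! Suc k))"

definition admissible_path :: "nat \<Rightarrow> nat set set \<Rightarrow> nat set list \<Rightarrow> bool" where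
  "admissible_path n D p \<longleftrightarrow> hc_walk n p \<and>
     (hd p = last p \<or> (hd p \<in> D \<and> last p \<in> D))"

definition steps :: "'a list \<Rightarrow> ('a \<times> 'a) multiset" where
  "steps p = mset (zip p (tl p))"

definition up_edges :: "nat set list \<Rightarrow> (nat set \<times> nat set) multiset" where
  "up_edges p = filter_mset (\<lambda>(u, v). u \<subset> v) (steps p)"

definition down_edges :: "nat set list \<Rightarrow> (nat set \<times> nat set) multiset" where
  "down_edges p = image_mset (\<lambda>(u, v). (v, u)) (filter_mset (\<lambda>(u, v). v \<subset> u) (steps p))"

definition edge_le :: "nat set \<times> nat set \<Rightarrow> nat set \<times> nat set \<Rightarrow> bool" where
  "edge_le e e' \<longleftrightarrow> snd e - fst e = snd e' - fst e' \<and> fst e \<subseteq> fst e'"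

definition all_up :: "nat set list list \<Rightarrow> (nat set \<times> nat set) multiset" where
  "all_up P = sum_list (map up_edges P)"

definition all_down :: "nat set list list \<Rightarrow> (nat set \<times> nat set) multiset" where
  "all_down P = sum_list (map down_edges P)"

definition matched :: "nat set list list \<Rightarrow> bool" where
  "matched P \<longleftrightarrow> (\<exists>M :: ((nat set \<times> nat set) \<times> (nat set \<times> nat set)) multiset.
     image_mset fst M = all_up P \<and> image_mset snd M = all_down P \<and>
     (\<forall>x\<in>#M. edge_le (fst x) (snd x)))"

definition path_value :: "(nat set \<Rightarrow> real) \<Rightarrow> nat set list \<Rightarrow> real" where
  "path_value f p = (if hd p = last p then 0 else f (last p) - f (hd p))"

definition coll_value :: "(nat set \<Rightarrow> real) \<Rightarrow> nat set list list \<Rightarrow> real" where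
  "coll_value f P = (\<Sum>p\<leftarrow>P. path_value f p)"

text \<open>A finite collection (with multiplicity) of admissible paths: a list.\<close>
definition path_certificate :: "nat \<Rightarrow> nat set set \<Rightarrow> (nat set \<Rightarrow> real) \<Rightarrow> nat set list list \<Rightarrow> bool" where
  "path_certificate n D f P \<longleftrightarrow> (\<forall>p\<in>set P. admissible_path n D p) \<and> matched P \<and>
     coll_value f P < 0"

end

theory Submission
  imports Defs
begin


definition co :: "('c \<Rightarrow> 'v \<Rightarrow> int) \<Rightarrow> 'c multiset \<Rightarrow> 'v \<Rightarrow> int" where
  "co A z v = (\<Sum>c\<in>#z. A c v)"
definition rh :: "('c \<Rightarrow> real) \<Rightarrow> 'c multiset \<Rightarrow> real" where
  "rh B z = (\<Sum>c\<in>#z. B c)"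

lemma co_add[simp]: "co A (y + z) v = co A y v + co A z v" by (simp add: co_def)
lemma rh_add[simp]: "rh B (y + z) = rh B y + rh B z" by (simp add: rh_def)
lemma co_rep[simp]: "co A (repeat_mset k y) v = int k * co A y v"
  by (induction k) (simp_all add: co_def algebra_simps)
lemma rh_rep[simp]: "rh B (repeat_mset k y) = real k * rh B y"
  by (induction k) (simp_all add: rh_def algebra_simps)

lemma in_repeat_mset: "x \<in># repeat_mset k a \<Longrightarrow> x \<in># a"
  by (metis count_eq_zero_iff count_repeat_mset mult_0_right)

lemma fm:
  assumes "finite V"
  shows "finite Y \<Longrightarrow> (\<forall>y\<in>Y. \<forall>v. v \<notin> V \<longrightarrow> co A y v = 0) \<Longrightarrow>
     \<not>(\<exists>x. \<forall>y\<in>Y. (\<Sum>v\<in>V. real_of_int (co A y v) * x v) \<le> rh B y) \<Longrightarrow>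
     \<exists>z. (\<forall>v. co A z v = 0) \<and> rh B z < 0 \<and> set_mset z \<subseteq> \<Union>(set_mset ` Y)"
  using assms
proof (induction V arbitrary: Y rule: finite_induct)
  case empty
  then obtain y where "y \<in> Y" "\<not> 0 \<le> rh B y" by auto
  then show ?case using empty.prems(2) by (intro exI[of _ y]) auto
next
  case (insert w V)
  define Y0 where "Y0 = {y\<in>Y. co A y w = 0}"
  define Yp where "Yp = {y\<in>Y. co A y w > 0}"
  define Yn where "Yn = {y\<in>Y. co A y w < 0}"
  define comb where "comb = (\<lambda>(p,q). repeat_mset (nat (- co A q w)) p + repeat_mset (nat (co A p w)) q)"
  define Y' where "Y' = Y0 \<union> comb ` (Yp \<times> Yn)"
  have fin: "finite Yp" "finite Yn" "finite Y0" using insert.prems(1) by (auto simp: Yp_def Yn_def Y0_def)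
  have co_comb: "co A (comb (p,q)) v = (- co A q w) * co A p v + co A p w * co A q v"
    if "p \<in> Yp" "q \<in> Yn" for p q v
    using that by (simp add: comb_def Yp_def Yn_def)
  have rh_comb: "rh B (comb (p,q)) = real_of_int (- co A q w) * rh B p + real_of_int (co A p w) * rh B q"
    if "p \<in> Yp" "q \<in> Yn" for p q
    using that by (simp add: comb_def Yp_def Yn_def)
  have "\<exists>z. (\<forall>v. co A z v = 0) \<and> rh B z < 0 \<and> set_mset z \<subseteq> \<Union>(set_mset ` Y')"
  proof (rule insert.IH)
    show "finite Y'" using fin by (simp add: Y'_def)
    show "\<forall>y\<in>Y'. \<forall>v. v \<notin> V \<longrightarrow> co A y v = 0"
    proof (intro ballI allI impI)
      fix y v assume y: "y \<in> Y'" and v: "v \<notin> V"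
      show "co A y v = 0"
      proof (cases "v = w")
        case True
        then show ?thesis using y by (auto simp: Y'_def Y0_def co_comb)
      next
        case False
        then have "v \<notin> insert w V" using v by auto
        then show ?thesis using y insert.prems(2)
          by (auto simp: Y'_def Y0_def Yp_def Yn_def co_comb)
      qed
    qed
    show "\<not>(\<exists>x. \<forall>y\<in>Y'. (\<Sum>v\<in>V. real_of_int (co A y v) * x v) \<le> rh B y)"
    proof
      assume "\<exists>x. \<forall>y\<in>Y'. (\<Sum>v\<in>V. real_of_int (co A y v) * x v) \<le> rh B y"
      then obtain x where x: "\<And>y. y\<in>Y' \<Longrightarrow> (\<Sum>v\<in>V. real_of_int (co A y v) * x v) \<le> rh B y" by blast
      define L where "L y = (\<Sum>v\<in>V. real_of_int (co A y v) * x v)" for y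
      define ub where "ub p = (rh B p - L p) / real_of_int (co A p w)" for p
      define t where "t = (if Yn = {} then (if Yp = {} then 0 else Min (ub ` Yp)) else Max (ub ` Yn))"
      have key: "ub q \<le> ub p" if "p \<in> Yp" "q \<in> Yn" for p q
      proof -
        have "comb (p,q) \<in> Y'" using that by (auto simp: Y'_def)
        from x[OF this] have "L (comb (p,q)) \<le> rh B (comb (p,q))" by (simp add: L_def)
        moreover have "L (comb (p,q)) = real_of_int (- co A q w) * L p + real_of_int (co A p w) * L q"
          unfolding L_def using that
          by (simp add: co_comb sum.distrib sum_distrib_left algebra_simps sum_subtractf sum_negf)
        ultimately have *: "real_of_int (- co A q w) * L p + real_of_int (co A p w) * L q
           \<le> real_of_int (- co A q w) * rh B p + real_of_int (co A p w) * rh B q"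
          using rh_comb[OF that] by simp
        have a: "real_of_int (co A p w) > 0" and b: "real_of_int (co A q w) < 0"
          using that by (auto simp: Yp_def Yn_def)
        show ?thesis unfolding ub_def
          using * a b apply (simp add: divide_simps)
          by (simp add: algebra_simps)
      qed
      have tp: "t \<le> ub p" if "p \<in> Yp" for p
      proof (cases "Yn = {}")
        case True
        then show ?thesis using that fin by (auto simp: t_def)
      next
        case False
        then have "Max (ub ` Yn) \<in> ub ` Yn" using fin by auto
        then show ?thesis using key[OF that] False by (auto simp: t_def)
      qed
      have tn: "ub q \<le> t" if "q \<in> Yn" for q
        using that fin by (auto simp: t_def)
      have "\<forall>y\<in>Y. (\<Sum>v\<in>insert w V. real_of_int (co A y v) * (x(w:=t)) v) \<le> rh B y"
      proof
        fix y assume y: "y \<in> Y"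
        have s: "(\<Sum>v\<in>insert w V. real_of_int (co A y v) * (x(w:=t)) v) = real_of_int (co A y w) * t + L y"
          using insert.hyps unfolding L_def by (simp add: sum.insert) (intro sum.cong, auto)
        consider "y \<in> Y0" | "y \<in> Yp" | "y \<in> Yn" using y by (fastforce simp: Y0_def Yp_def Yn_def)
        then show "(\<Sum>v\<in>insert w V. real_of_int (co A y v) * (x(w:=t)) v) \<le> rh B y"
        proof cases
          case 1
          then show ?thesis using x[of y] s by (auto simp: Y'_def Y0_def L_def)
        next
          case 2
          then have a: "real_of_int (co A y w) > 0" by (auto simp: Yp_def)
          have "t \<le> ub y" using tp 2 by auto
          then show ?thesis using a s by (simp add: ub_def pos_le_divide_eq mult.commute)
        next
          case 3
          then have a: "real_of_int (co A y w) < 0" by (auto simp: Yn_def)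
          have "ub y \<le> t" using tn 3 by auto
          then show ?thesis using a s by (simp add: ub_def neg_divide_le_eq mult.commute)
        qed
      qed
      then show False using insert.prems(3) by blast
    qed
  qed
  then obtain z where z: "\<forall>v. co A z v = 0" "rh B z < 0" "set_mset z \<subseteq> \<Union>(set_mset ` Y')" by blast
  have sub: "\<Union>(set_mset ` Y') \<subseteq> \<Union>(set_mset ` Y)"
  proof
    fix c assume "c \<in> \<Union>(set_mset ` Y')"
    then obtain y where y: "y \<in> Y'" "c \<in># y" by blast
    show "c \<in> \<Union>(set_mset ` Y)"
    proof (cases "y \<in> Y0")
      case True then show ?thesis using y by (auto simp: Y0_def)
    next
      case False
      then obtain p q where pq: "p \<in> Yp" "q \<in> Yn" "y = comb (p,q)" using y unfolding Y'_def by blast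
      then have "c \<in># repeat_mset (nat (- co A q w)) p + repeat_mset (nat (co A p w)) q" using y(2) by (simp add: comb_def)
      then have "c \<in># p \<or> c \<in># q" unfolding union_iff by (blast dest: in_repeat_mset)
      then show ?thesis using pq by (auto simp: Yp_def Yn_def)
    qed
  qed
  show ?case using z(1,2) order_trans[OF z(3) sub] by blast
qed




lemma steps_Nil[simp]: "steps [] = {#}" by (simp add: steps_def)
lemma steps_single[simp]: "steps [x] = {#}" by (simp add: steps_def)
lemma steps_cons2[simp]: "steps (x # y # r) = add_mset (x, y) (steps (y # r))" by (simp add: steps_def)

lemma steps_append:
  "p \<noteq> [] \<Longrightarrow> q \<noteq> [] \<Longrightarrow> hd q = last p \<Longrightarrow> steps (p @ tl q) = steps p + steps q"
proof (induction p rule: induct_list012)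
  case 1 then show ?case by simp
next
  case (2 x) then show ?case by (cases q) auto
next
  case (3 x y zs) then show ?case by simp
qed

definition dg :: "('a \<times> 'a) multiset \<Rightarrow> 'a \<Rightarrow> int" where
  "dg E v = int (count (image_mset fst E) v) - int (count (image_mset snd E) v)"

lemma dg_add[simp]: "dg (A + B) v = dg A v + dg B v" by (simp add: dg_def)
lemma dg_empty[simp]: "dg {#} v = 0" by (simp add: dg_def)
lemma dg_add_mset[simp]: "dg (add_mset e A) v = of_bool (v = fst e) - of_bool (v = snd e) + dg A v"
  by (simp add: dg_def)

lemma dg_steps: "p \<noteq> [] \<Longrightarrow> dg (steps p) v = of_bool (v = hd p) - of_bool (v = last p)"
  by (induction p rule: induct_list012) auto

lemma dg_sum: "dg (\<Sum>q\<in>#P. h q) v = (\<Sum>q\<in>#P. dg (h q) v)"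
  by (induction P) auto

lemma sum_mset_le0: "(\<And>q. q \<in># P \<Longrightarrow> g q \<le> (0::int)) \<Longrightarrow> (\<Sum>q\<in>#P. g q) \<le> 0"
  by (induction P) (auto simp: add_nonpos_nonpos)

lemma sum_mset_ge0: "(\<And>q. q \<in># P \<Longrightarrow> g q \<ge> (0::int)) \<Longrightarrow> (\<Sum>q\<in>#P. g q) \<ge> 0"
  by (induction P) auto

lemma sum_single_mset: "(\<Sum>p\<in>#image_mset (\<lambda>e. [fst e, snd e]) E. steps p) = E"
  by (induction E) auto

definition goodP :: "('a \<times> 'a) multiset \<Rightarrow> 'a list multiset \<Rightarrow> bool" where
  "goodP E P \<longleftrightarrow> (\<Sum>p\<in>#P. steps p) = E \<and> (\<forall>p\<in>#P. 2 \<le> length p)"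

lemma merge_good:
  assumes g: "goodP E P" and p: "p \<in># P" and q: "q \<in># P - {#p#}" and h: "hd q = last p"
  shows "goodP E (add_mset (p @ tl q) (P - {#p#} - {#q#}))"
proof -
  have lp: "2 \<le> length p" and lq: "2 \<le> length q" using g p q by (auto simp: goodP_def dest: in_diffD)
  have s: "steps (p @ tl q) = steps p + steps q" using lp lq h by (intro steps_append) auto
  have P1: "P = add_mset p (P - {#p#})" using p by simp
  have P2: "P - {#p#} = add_mset q (P - {#p#} - {#q#})" using q by (metis insert_DiffM)
  define R where "R = P - {#p#} - {#q#}"
  have "(\<Sum>r\<in>#P. steps r) = steps p + steps q + (\<Sum>r\<in>#R. steps r)"
    unfolding R_def by (subst P1, subst P2) (simp add: add.assoc)
  moreover have "(\<Sum>r\<in>#add_mset (p @ tl q) R. steps r) = steps (p @ tl q) + (\<Sum>r\<in>#R. steps r)"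
    by simp
  moreover have "\<forall>r\<in>#R. 2 \<le> length r"
    using g unfolding goodP_def R_def by (metis in_diffD)
  moreover have "2 \<le> length (p @ tl q)" using lp by simp
  ultimately show ?thesis using g s unfolding goodP_def R_def[symmetric]
    by auto
qed

lemma size_merge:
  assumes "p \<in># P" "q \<in># P - {#p#}"
  shows "size (add_mset r (P - {#p#} - {#q#})) < size P"
proof -
  have a: "size (P - {#p#}) = size P - 1" using assms(1) by (simp add: size_Diff_singleton)
  have b: "size (P - {#p#} - {#q#}) = size (P - {#p#}) - 1" using size_Diff_singleton[OF assms(2)] by simp
  have "P - {#p#} \<noteq> {#}" using assms(2) by auto
  then have "size (P - {#p#}) > 0" by (simp add: nonempty_has_size)
  then show ?thesis using a b by simp
qed

lemma decomp:
  fixes E :: "('a \<times> 'a) multiset"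
  shows "\<exists>P. goodP E P \<and> (\<forall>p\<in>#P. hd p \<noteq> last p \<longrightarrow> dg E (hd p) \<noteq> 0 \<and> dg E (last p) \<noteq> 0)"
proof -
  have "goodP E (image_mset (\<lambda>e. [fst e, snd e]) E)"
    by (simp add: goodP_def sum_single_mset)
  then obtain P where P: "goodP E P" and min: "\<And>Q. goodP E Q \<Longrightarrow> size P \<le> size Q"
    using ex_has_least_nat[of "goodP E" _ size] by blast
  have EP: "E = (\<Sum>p\<in>#P. steps p)" and len: "\<And>p. p \<in># P \<Longrightarrow> 2 \<le> length p"
    using P by (auto simp: goodP_def)
  have dgE: "dg E v = (\<Sum>q\<in>#P. of_bool (v = hd q) - of_bool (v = last q))" for v
  proof -
    have "dg E v = (\<Sum>q\<in>#P. dg (steps q) v)" by (simp add: EP dg_sum)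
    also have "\<dots> = (\<Sum>q\<in>#P. of_bool (v = hd q) - of_bool (v = last q))"
      by (intro arg_cong[where f=sum_mset] image_mset_cong) (use len in \<open>force intro!: dg_steps\<close>)
    finally show ?thesis .
  qed
  have dgE': "dg E v = of_bool (v = hd p) - of_bool (v = last p) +
      (\<Sum>q\<in>#P - {#p#}. of_bool (v = hd q) - of_bool (v = last q))" if "p \<in># P" for p v
  proof -
    have e: "P = add_mset p (P - {#p#})" using that by simp
    show ?thesis using dgE[of v] by (subst (asm) e) simp
  qed
  show ?thesis
  proof (intro exI[of _ P] conjI P ballI impI)
    fix p assume p: "p \<in># P" and ne: "hd p \<noteq> last p"
    show "dg E (last p) \<noteq> 0"
    proof
      assume z: "dg E (last p) = 0"
      have "\<exists>q\<in>#P - {#p#}. hd q = last p"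
      proof (rule ccontr)
        assume "\<not> ?thesis"
        then have "(\<Sum>q\<in>#P - {#p#}. of_bool (last p = hd q) - of_bool (last p = last q)) \<le> (0::int)"
          by (intro sum_mset_le0) auto
        then show False using dgE'[OF p, of "last p"] z ne by simp
      qed
      then obtain q where q: "q \<in># P - {#p#}" "hd q = last p" by blast
      have "goodP E (add_mset (p @ tl q) (P - {#p#} - {#q#}))" using merge_good[OF P p q] by simp
      from min[OF this] show False using p q
        using size_merge[OF p q(1), of "p @ tl q"] by simp
    qed
    show "dg E (hd p) \<noteq> 0"
    proof
      assume z: "dg E (hd p) = 0"
      have "\<exists>q\<in>#P - {#p#}. last q = hd p"
      proof (rule ccontr)
        assume "\<not> ?thesis"
        then have "(\<Sum>q\<in>#P - {#p#}. of_bool (hd p = hd q) - of_bool (hd p = last q)) \<ge> (0::int)"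
          by (intro sum_mset_ge0) auto
        then show False using dgE'[OF p, of "hd p"] z ne by simp
      qed
      then obtain q where q: "q \<in># P - {#p#}" "last q = hd p" by blast
      have qP: "q \<in># P" using q by (auto dest: in_diffD)
      have pq: "p \<in># P - {#q#}" using p q
        by (cases "p = q") (auto simp: in_diff_count)
      have "goodP E (add_mset (q @ tl p) (P - {#q#} - {#p#}))" using merge_good[OF P qP pq] q by simp
      from min[OF this] show False using qP pq
        using size_merge[OF qP pq, of "q @ tl p"] by simp
    qed
  qed
qed




lemma telescope: fixes h :: "'a \<Rightarrow> real"
  shows "p \<noteq> [] \<Longrightarrow> h (last p) - h (hd p) = (\<Sum>e\<in>#steps p. h (snd e) - h (fst e))"
proof (induction p rule: induct_list012)
  case (3 x y zs)
  then show ?case by simp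
qed auto

lemma sum_over_sum_list: "(\<Sum>e\<in>#sum_list (map k L). g e) = (\<Sum>p\<leftarrow>L. (\<Sum>e\<in>#k p. g e))"
  by (induction L) auto

lemma sum_over_sum_mset: "(\<Sum>e\<in>#(\<Sum>c\<in>#z. k c). g e) = (\<Sum>c\<in>#z. (\<Sum>e\<in>#k c. g e))"
  by (induction z) auto

lemma filter_sum_mset: "filter_mset P (\<Sum>c\<in>#z. k c) = (\<Sum>c\<in>#z. filter_mset P (k c))"
  by (induction z) auto

lemma image_sum_mset: "image_mset g (\<Sum>c\<in>#z. k c) = (\<Sum>c\<in>#z. image_mset g (k c))"
  by (induction z) auto

lemma image_mset_sum_list': "image_mset g (sum_list xs) = sum_list (map (image_mset g) xs)"
  by (induction xs) auto

lemma sum_img_diff: fixes m :: "'b \<Rightarrow> real"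
  shows "(\<Sum>e\<in>#image_mset h M. m e) - (\<Sum>e\<in>#image_mset k M. m e) = (\<Sum>x\<in>#M. m (h x) - m (k x))"
  by (induction M) auto

lemma sum_mset_nonneg': "(\<And>y. y \<in># M \<Longrightarrow> (0::real) \<le> y) \<Longrightarrow> 0 \<le> sum_mset M"
  by (induction M) auto

lemma sum_mset_cong': "(\<And>c. c \<in># z \<Longrightarrow> g c = h c) \<Longrightarrow> (\<Sum>c\<in>#z. g c) = (\<Sum>c\<in>#z. h c)"
  by (metis image_mset_cong)

lemma step_in_zip: "Suc k < length p \<Longrightarrow> (p ! k, p ! Suc k) \<in># steps p"
  unfolding steps_def
  by (simp add: set_zip) (rule exI[of _ k], simp add: nth_tl)

lemma step_adj: "hc_walk n p \<Longrightarrow> e \<in># steps p \<Longrightarrow> hc_adj n (fst e) (snd e)"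
  unfolding steps_def hc_walk_def
  by (auto simp: set_zip nth_tl)

lemma walk_of_steps:
  assumes l: "2 \<le> length p" and a: "\<And>e. e \<in># steps p \<Longrightarrow> hc_adj n (fst e) (snd e)"
  shows "hc_walk n p"
  unfolding hc_walk_def
proof (intro conjI allI impI)
  show "p \<noteq> []" using l by auto
  show "hc_adj n (p ! k) (p ! Suc k)" if "Suc k < length p" for k
    using a[OF step_in_zip[OF that]] by simp
  show "set p \<subseteq> Pow {..<n}"
  proof
    fix x assume "x \<in> set p"
    then obtain k where k: "k < length p" "x = p ! k" by (auto simp: in_set_conv_nth)
    show "x \<in> Pow {..<n}"
    proof (cases "Suc k < length p")
      case True
      then show ?thesis using a[OF step_in_zip[OF True]] k by (simp add: hc_adj_def)
    next
      case False
      then have "Suc (k - 1) < length p" "Suc (k - 1) = k" using k l by auto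
      then show ?thesis using a[OF step_in_zip[of "k - 1" p]] k by (simp add: hc_adj_def)
    qed
  qed
qed

lemma split_adj:
  fixes g :: "nat set \<Rightarrow> real"
  assumes "\<And>e. e \<in># F \<Longrightarrow> hc_adj n (fst e) (snd e)"
  shows "(\<Sum>e\<in>#F. g (snd e) - g (fst e)) =
    (\<Sum>e\<in>#filter_mset (\<lambda>(u, v). u \<subset> v) F. g (snd e) - g (fst e)) -
    (\<Sum>e\<in>#image_mset (\<lambda>(u, v). (v, u)) (filter_mset (\<lambda>(u, v). v \<subset> u) F). g (snd e) - g (fst e))"
  using assms
proof (induction F)
  case empty then show ?case by simp
next
  case (add x F)
  obtain a b where x: "x = (a, b)" by (cases x)
  have IH: "(\<Sum>e\<in>#F. g (snd e) - g (fst e)) =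
    (\<Sum>e\<in>#filter_mset (\<lambda>(u, v). u \<subset> v) F. g (snd e) - g (fst e)) -
    (\<Sum>e\<in>#image_mset (\<lambda>(u, v). (v, u)) (filter_mset (\<lambda>(u, v). v \<subset> u) F). g (snd e) - g (fst e))"
    using add.IH add.prems by simp
  have "hc_adj n a b" using add.prems x by (metis fst_conv snd_conv union_single_eq_member)
  then have "(a \<subset> b \<and> \<not> b \<subset> a) \<or> (b \<subset> a \<and> \<not> a \<subset> b)"
    unfolding hc_adj_def by auto
  then show ?case
  proof
    assume h: "a \<subset> b \<and> \<not> b \<subset> a"
    show ?case unfolding x using h IH by simp
  next
    assume h: "b \<subset> a \<and> \<not> a \<subset> b"
    show ?case unfolding x using h IH by simp
  qed
qed

lemma easy:
  assumes sub: "submodular_on n g" and agree: "\<forall>S\<in>D. g S = f S"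
    and adm: "\<forall>p\<in>set P. admissible_path n D p" and mt: "matched P"
  shows "coll_value f P \<ge> 0"
proof -
  define m where "m e = g (snd e) - g (fst e)" for e :: "nat set \<times> nat set"
  define F where "F = sum_list (map steps P)"
  have pv: "path_value f p = (\<Sum>e\<in>#steps p. m e)" if "p \<in> set P" for p
  proof -
    have w: "hc_walk n p" and e: "hd p = last p \<or> (hd p \<in> D \<and> last p \<in> D)"
      using adm that by (auto simp: admissible_path_def)
    have "p \<noteq> []" using w by (simp add: hc_walk_def)
    have "path_value f p = g (last p) - g (hd p)"
      using e agree by (auto simp: path_value_def)
    also have "\<dots> = (\<Sum>e\<in>#steps p. m e)" unfolding m_def by (rule telescope) fact
    finally show ?thesis .
  qed
  have "coll_value f P = (\<Sum>p\<leftarrow>P. (\<Sum>e\<in>#steps p. m e))"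
    unfolding coll_value_def by (intro arg_cong[where f=sum_list] map_cong) (auto simp: pv)
  also have "\<dots> = (\<Sum>e\<in>#F. m e)" unfolding F_def by (simp add: sum_over_sum_list)
  also have "\<dots> = (\<Sum>e\<in>#all_up P. m e) - (\<Sum>e\<in>#all_down P. m e)"
  proof -
    have adj: "hc_adj n (fst e) (snd e)" if "e \<in># F" for e
    proof -
      from that obtain p where "p \<in> set P" "e \<in># steps p" by (auto simp: F_def)
      then show ?thesis using adm step_adj by (auto simp: admissible_path_def)
    qed
    have u: "all_up P = filter_mset (\<lambda>(u, v). u \<subset> v) F"
      by (simp add: all_up_def F_def up_edges_def[abs_def] filter_mset_sum_list comp_def)
    have d: "all_down P = image_mset (\<lambda>(u, v). (v, u)) (filter_mset (\<lambda>(u, v). v \<subset> u) F)"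
      by (simp add: all_down_def F_def down_edges_def[abs_def] filter_mset_sum_list comp_def image_mset_sum_list')
    show ?thesis unfolding u d m_def by (rule split_adj[OF adj])
  qed
  also have "\<dots> \<ge> 0"
  proof -
    obtain M where M: "image_mset fst M = all_up P" "image_mset snd M = all_down P"
      "\<forall>x\<in>#M. edge_le (fst x) (snd x)" using mt by (auto simp: matched_def)
    have "(\<Sum>e\<in>#all_up P. m e) - (\<Sum>e\<in>#all_down P. m e) = (\<Sum>x\<in>#M. m (fst x) - m (snd x))"
      unfolding M(1)[symmetric] M(2)[symmetric] by (rule sum_img_diff)
    also have "\<dots> \<ge> 0"
    proof (rule sum_mset_nonneg')
      fix y assume "y \<in># image_mset (\<lambda>x. m (fst x) - m (snd x)) M"
      then obtain x where x: "x \<in># M" "y = m (fst x) - m (snd x)" by auto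
      have "fst x \<in># all_up P" using M(1) x(1) by (metis image_eqI set_image_mset)
      then obtain p where p0: "p \<in> set P" "fst x \<in># up_edges p" by (auto simp: all_up_def)
      obtain a b where ab: "fst x = (a, b)" by (cases "fst x")
      have p: "p \<in> set P" "fst x \<in># steps p" "fst (fst x) \<subset> snd (fst x)"
        using p0 unfolding ab up_edges_def by simp_all
      have "hc_adj n a b" using adm step_adj p ab by (fastforce simp: admissible_path_def)
      then obtain i where i0: "i < n" "(i \<notin> a \<and> b = insert i a) \<or> (i \<notin> b \<and> a = insert i b)"
        "a \<subseteq> {..<n}" unfolding hc_adj_def by blast
      have ab': "a \<subset> b" using p(3) ab by simp
      have "\<not> (a = insert i b)" using ab' by blast
      then have i: "i < n" "i \<notin> fst (fst x)" "snd (fst x) = insert i (fst (fst x))"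
        "fst (fst x) \<subseteq> {..<n}" using i0 ab by auto
      have "snd x \<in># all_down P" using M(2) x(1) by (metis image_eqI set_image_mset)
      then obtain p' where p0': "p' \<in> set P" "snd x \<in># down_edges p'" by (auto simp: all_down_def)
      have "snd x \<in> (\<lambda>(u, v). (v, u)) ` set_mset (filter_mset (\<lambda>(u, v). v \<subset> u) (steps p'))"
        using p0'(2) unfolding down_edges_def set_image_mset .
      then obtain e where e: "e \<in># filter_mset (\<lambda>(u, v). v \<subset> u) (steps p')" "snd x = (\<lambda>(u, v). (v, u)) e"
        by (rule imageE) simp
      obtain u v where uv: "e = (u, v)" by (cases e)
      have p': "p' \<in> set P" "(u, v) \<in># steps p'" "v \<subset> u" "snd x = (v, u)"
        using p0' e unfolding uv by simp_all
      then have "hc_adj n u v" using adm step_adj by (fastforce simp: admissible_path_def)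
      then obtain j where j0: "j < n" "(j \<notin> u \<and> v = insert j u) \<or> (j \<notin> v \<and> u = insert j v)"
        "u \<subseteq> {..<n}" unfolding hc_adj_def by blast
      have "\<not> (v = insert j u)" using p'(3) by blast
      then have j: "j < n" "j \<notin> v" "u = insert j v" "u \<subseteq> {..<n}" using j0 by auto
      have le: "edge_le (fst x) (snd x)" using M(3) x(1) by auto
      then have "{i} = {j}" using i j p'(4) unfolding edge_le_def by auto
      then have ij: "i = j" by simp
      have sv: "fst (fst x) \<subseteq> v" using le p'(4) by (simp add: edge_le_def)
      have "g (insert i (fst (fst x))) - g (fst (fst x)) \<ge> g (insert i v) - g v"
        using sub sv i j ij unfolding submodular_on_def by auto
      then show "0 \<le> y" using x(2) i j ij p'(4) by (simp add: m_def)
    qed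
    finally show ?thesis .
  qed
  finally show ?thesis .
qed




type_synonym cidx = "(nat set \<times> nat set \<times> nat) + (nat set \<times> bool)"

fun Ac :: "cidx \<Rightarrow> nat set \<Rightarrow> int" where
  "Ac (Inl (S, T, i)) v = (if v = S then 1 else 0) + (if v = insert i T then 1 else 0)
      - (if v = insert i S then 1 else 0) - (if v = T then 1 else 0)"
| "Ac (Inr (S, b)) v = (if b then (if v = S then 1 else 0) else (if v = S then -1 else 0))"

fun Bc :: "(nat set \<Rightarrow> real) \<Rightarrow> cidx \<Rightarrow> real" where
  "Bc f (Inl _) = 0"
| "Bc f (Inr (S, b)) = (if b then f S else - f S)"

fun lin :: "cidx \<Rightarrow> (nat set \<Rightarrow> real) \<Rightarrow> real" where
  "lin (Inl (S, T, i)) h = h S + h (insert i T) - h (insert i S) - h T"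
| "lin (Inr (S, b)) h = (if b then h S else - h S)"

fun ed :: "cidx \<Rightarrow> (nat set \<times> nat set) multiset" where
  "ed (Inl (S, T, i)) = {#(S, insert i S), (insert i T, T)#}"
| "ed (Inr _) = {#}"

fun upE :: "cidx \<Rightarrow> (nat set \<times> nat set) multiset" where
  "upE (Inl (S, T, i)) = {#(S, insert i S)#}"
| "upE (Inr _) = {#}"

fun dnE :: "cidx \<Rightarrow> (nat set \<times> nat set) multiset" where
  "dnE (Inl (S, T, i)) = {#(T, insert i T)#}"
| "dnE (Inr _) = {#}"

fun prE :: "cidx \<Rightarrow> ((nat set \<times> nat set) \<times> (nat set \<times> nat set)) multiset" where
  "prE (Inl (S, T, i)) = {#((S, insert i S), (T, insert i T))#}"
| "prE (Inr _) = {#}"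

definition Cset :: "nat \<Rightarrow> nat set set \<Rightarrow> cidx set" where
  "Cset n D = Inl ` {(S, T, i). S \<subseteq> T \<and> T \<subseteq> {..<n} \<and> i < n \<and> i \<notin> T} \<union> Inr ` (D \<times> UNIV)"

lemma lin_sum:
  assumes "finite V" "c \<in> Cset n D" "D \<subseteq> V" "Pow {..<n} \<subseteq> V"
  shows "(\<Sum>v\<in>V. real_of_int (Ac c v) * h v) = lin c h"
proof (cases c)
  case (Inl a)
  then obtain S T i where c: "c = Inl (S, T, i)" and st: "S \<subseteq> T" "T \<subseteq> {..<n}" "i < n"
    using assms(2) by (auto simp: Cset_def)
  have "S \<in> Pow {..<n}" "T \<in> Pow {..<n}" "insert i S \<in> Pow {..<n}" "insert i T \<in> Pow {..<n}"
    using st by auto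
  then have mem: "S \<in> V" "T \<in> V" "insert i S \<in> V" "insert i T \<in> V" using assms(4) by blast+
  have "(\<Sum>v\<in>V. real_of_int (Ac c v) * h v) =
     (\<Sum>v\<in>V. (if v = S then h v else 0)) + (\<Sum>v\<in>V. (if v = insert i T then h v else 0))
     - (\<Sum>v\<in>V. (if v = insert i S then h v else 0)) - (\<Sum>v\<in>V. (if v = T then h v else 0))"
  proof -
    have pt: "real_of_int (Ac c v) * h v = (if v = S then h v else 0) + (if v = insert i T then h v else 0)
     - (if v = insert i S then h v else 0) - (if v = T then h v else 0)" for v
      unfolding c by (auto simp: algebra_simps)
    show ?thesis unfolding pt by (simp add: sum.distrib sum_subtractf)
  qed
  also have "\<dots> = lin c h" using mem assms(1) unfolding c by (simp add: sum.delta)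
  finally show ?thesis .
next
  case (Inr a)
  then obtain S b where c: "c = Inr (S, b)" and S: "S \<in> D" using assms(2) by (auto simp: Cset_def)
  have mem: "S \<in> V" using S assms(3) by auto
  show ?thesis using mem assms(1) unfolding c
    by (cases b) (simp_all add: sum.delta if_distrib[of real_of_int] if_distrib[of "\<lambda>x. x * _"] cong: if_cong)
qed

lemma co_single[simp]: "co A {#c#} v = A c v" by (simp add: co_def)
lemma rh_single[simp]: "rh B {#c#} = B c" by (simp add: rh_def)

lemma finite_Cset: "finite D \<Longrightarrow> finite (Cset n D)"
proof -
  assume fD: "finite D"
  have "{(S, T, i). S \<subseteq> T \<and> T \<subseteq> {..<n} \<and> i < n \<and> i \<notin> T} \<subseteq> Pow {..<n} \<times> Pow {..<n} \<times> {..<n}"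
    by auto
  then have "finite {(S, T, i). S \<subseteq> T \<and> T \<subseteq> {..<n} \<and> i < n \<and> i \<notin> T}"
    by (rule finite_subset) auto
  then show ?thesis using fD by (simp add: Cset_def)
qed

lemma Ac_zero:
  assumes "c \<in> Cset n D" "D \<subseteq> Pow {..<n}" "v \<notin> Pow {..<n}"
  shows "Ac c v = 0"
proof (cases c)
  case (Inl a)
  then obtain S T i where c: "c = Inl (S, T, i)" and st: "S \<subseteq> T" "T \<subseteq> {..<n}" "i < n"
    using assms(1) by (auto simp: Cset_def)
  have "S \<in> Pow {..<n}" "T \<in> Pow {..<n}" "insert i S \<in> Pow {..<n}" "insert i T \<in> Pow {..<n}"
    using st by auto
  then have "v \<noteq> S" "v \<noteq> T" "v \<noteq> insert i S" "v \<noteq> insert i T" using assms(3) by auto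
  then show ?thesis unfolding c by simp
next
  case (Inr a)
  then obtain S b where c: "c = Inr (S, b)" and S: "S \<in> D" using assms(1) by (auto simp: Cset_def)
  then have "v \<noteq> S" using assms(2,3) by auto
  then show ?thesis unfolding c by simp
qed

lemma infeasible:
  assumes D: "D \<subseteq> Pow {..<n}" and ne: "\<not> submodular_extendable n D f"
  shows "\<not> (\<exists>x. \<forall>y\<in>(\<lambda>c. {#c#}) ` Cset n D.
            (\<Sum>v\<in>Pow {..<n}. real_of_int (co Ac y v) * x v) \<le> rh (Bc f) y)"
proof
  assume "\<exists>x. \<forall>y\<in>(\<lambda>c. {#c#}) ` Cset n D.
            (\<Sum>v\<in>Pow {..<n}. real_of_int (co Ac y v) * x v) \<le> rh (Bc f) y"
  then obtain x where x: "\<And>c. c \<in> Cset n D \<Longrightarrow> lin c x \<le> Bc f c"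
    using lin_sum[OF _ _ D order_refl] by fastforce
  have "submodular_on n x"
    unfolding submodular_on_def
  proof (intro allI impI)
    fix S T i assume h: "S \<subseteq> T \<and> T \<subseteq> {..<n} \<and> i < n \<and> i \<notin> T"
    then have "Inl (S, T, i) \<in> Cset n D" by (auto simp: Cset_def)
    from x[OF this] show "x (insert i S) - x S \<ge> x (insert i T) - x T" by simp
  qed
  moreover have "\<forall>S\<in>D. x S = f S"
  proof
    fix S assume "S \<in> D"
    then have "Inr (S, True) \<in> Cset n D" "Inr (S, False) \<in> Cset n D" by (auto simp: Cset_def)
    from x[OF this(1)] x[OF this(2)] show "x S = f S" by simp
  qed
  ultimately show False using ne by (auto simp: submodular_extendable_def)
qed

lemma in_sum_mset_image: "e \<in># (\<Sum>c\<in>#z. k c) \<Longrightarrow> \<exists>c\<in>#z. e \<in># k c"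
  by (induction z) auto

lemma sub_sum_mset_image: "x \<in># A \<Longrightarrow> k x \<subseteq># (\<Sum>a\<in>#A. k a)"
  by (metis multi_member_split sum_mset.insert image_mset_add_mset mset_subset_eq_add_left)

lemma sum_mset_diff_real: "(\<Sum>c\<in>#z. (a c :: real) - b c) = (\<Sum>c\<in>#z. a c) - (\<Sum>c\<in>#z. b c)"
  by (induction z) auto

lemma swap_sums: "(\<Sum>c\<in>#z. \<Sum>v\<in>V. real_of_int (A c v) * h v) = (\<Sum>v\<in>V. real_of_int (co A z v) * h v)"
proof (induction z)
  case empty then show ?case by (simp add: co_def)
next
  case (add c z)
  have "co A (add_mset c z) v = A c v + co A z v" for v by (simp add: co_def)
  then show ?case using add by (simp add: sum.distrib distrib_right)
qed

context
  fixes n :: nat and D :: "nat set set" and c :: cidx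
  assumes cC: "c \<in> Cset n D"
begin

lemma cInl: obtains S T i where "c = Inl (S, T, i)" "S \<subseteq> T" "T \<subseteq> {..<n}" "i < n" "i \<notin> T"
  | S b where "c = Inr (S, b)" "S \<in> D"
  using cC unfolding Cset_def by blast

lemma c_up: "filter_mset (\<lambda>(u, v). u \<subset> v) (ed c) = upE c"
proof (cases rule: cInl)
  case (1 S T i)
  then have "i \<notin> S" by auto
  then show ?thesis using 1 by auto
qed simp

lemma c_dn: "image_mset (\<lambda>(u, v). (v, u)) (filter_mset (\<lambda>(u, v). v \<subset> u) (ed c)) = dnE c"
proof (cases rule: cInl)
  case (1 S T i)
  then have "i \<notin> S" by auto
  then show ?thesis using 1 by auto
qed simp

lemma c_fst: "image_mset fst (prE c) = upE c"
  by (cases rule: cInl) auto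

lemma c_snd: "image_mset snd (prE c) = dnE c"
  by (cases rule: cInl) auto

lemma c_le: "\<forall>x\<in>#prE c. edge_le (fst x) (snd x)"
proof (cases rule: cInl)
  case (1 S T i)
  then have "i \<notin> S" by auto
  then have "insert i S - S = {i}" "insert i T - T = {i}" using 1 by auto
  then show ?thesis using 1 by (simp add: edge_le_def)
qed simp

lemma c_dg: "v \<notin> D \<Longrightarrow> dg (ed c) v = Ac c v"
proof (cases rule: cInl)
  case (1 S T i)
  then show ?thesis by (simp add: dg_def)
next
  case (2 S b)
  assume "v \<notin> D"
  then have "v \<noteq> S" using 2 by auto
  then show ?thesis using 2 by simp
qed

lemma c_val: "(\<Sum>e\<in>#ed c. h (snd e) - h (fst e)) = Bc h c - lin c h"
  by (cases rule: cInl) auto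

lemma c_adj: "e \<in># ed c \<Longrightarrow> hc_adj n (fst e) (snd e)"
proof (cases rule: cInl)
  case (1 S T i)
  assume e: "e \<in># ed c"
  have "i \<notin> S" using 1 by auto
  then show ?thesis using 1 e by (auto simp: hc_adj_def)
next
  case (2 S b)
  assume "e \<in># ed c" then show ?thesis using 2 by simp
qed

end


lemma hard:
  assumes D: "D \<subseteq> Pow {..<n}" and ne: "\<not> submodular_extendable n D f"
  shows "\<exists>P. path_certificate n D f P"
proof -
  have fD: "finite D" using D by (rule finite_subset) simp
  define C where "C = Cset n D"
  have "\<exists>z. (\<forall>v. co Ac z v = 0) \<and> rh (Bc f) z < 0 \<and> set_mset z \<subseteq> \<Union>(set_mset ` (\<lambda>c. {#c#}) ` C)"
  proof (rule fm)
    show "finite (Pow {..<n})" by simp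
    show "finite ((\<lambda>c. {#c#}) ` C)" using finite_Cset[OF fD] by (simp add: C_def)
    show "\<forall>y\<in>(\<lambda>c. {#c#}) ` C. \<forall>v. v \<notin> Pow {..<n} \<longrightarrow> co Ac y v = 0"
      using Ac_zero[OF _ D] by (auto simp: C_def)
    show "\<not> (\<exists>x. \<forall>y\<in>(\<lambda>c. {#c#}) ` C. (\<Sum>v\<in>Pow {..<n}. real_of_int (co Ac y v) * x v) \<le> rh (Bc f) y)"
      using infeasible[OF D ne] by (simp add: C_def)
  qed
  then obtain z where z0: "\<forall>v. co Ac z v = 0" "rh (Bc f) z < 0" "set_mset z \<subseteq> \<Union>(set_mset ` (\<lambda>c. {#c#}) ` C)"
    by blast
  have zC: "c \<in> Cset n D" if "c \<in># z" for c using z0(3) that by (auto simp: C_def)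
  define E where "E = (\<Sum>c\<in>#z. ed c)"
  obtain Pm where Pm: "goodP E Pm" and ends: "\<forall>p\<in>#Pm. hd p \<noteq> last p \<longrightarrow> dg E (hd p) \<noteq> 0 \<and> dg E (last p) \<noteq> 0"
    using decomp by blast
  obtain L where L: "mset L = Pm" using ex_mset by blast
  define M where "M = (\<Sum>c\<in>#z. prE c)"
  have FL: "sum_list (map steps L) = E"
  proof -
    have "sum_list (map steps L) = sum_mset (mset (map steps L))" by (rule sum_mset_sum_list[symmetric])
    also have "\<dots> = (\<Sum>p\<in>#Pm. steps p)" using L by (simp only: mset_map)
    finally show ?thesis using Pm by (simp add: goodP_def)
  qed
  have Eadj: "hc_adj n (fst e) (snd e)" if eE: "e \<in># E" for e
  proof -
    obtain c where "c \<in># z" "e \<in># ed c" using in_sum_mset_image[of e ed z] eE unfolding E_def by blast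
    then show ?thesis using c_adj[OF zC] by blast
  qed
  have dgD: "v \<in> D" if "dg E v \<noteq> 0" for v
  proof (rule ccontr)
    assume v: "v \<notin> D"
    have "dg E v = (\<Sum>c\<in>#z. dg (ed c) v)" unfolding E_def by (rule dg_sum)
    also have "\<dots> = (\<Sum>c\<in>#z. Ac c v)" by (rule sum_mset_cong') (metis c_dg zC v)
    also have "\<dots> = co Ac z v" by (simp add: co_def)
    finally show False using that z0(1) by simp
  qed
  have adm: "\<forall>p\<in>set L. admissible_path n D p"
  proof
    fix p assume "p \<in> set L"
    then have pP: "p \<in># Pm" using L by auto
    have len: "2 \<le> length p" using Pm pP by (simp add: goodP_def)
    have sub: "steps p \<subseteq># E" using Pm sub_sum_mset_image[OF pP, of steps] by (simp add: goodP_def)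
    have w: "hc_walk n p"
      by (rule walk_of_steps[OF len]) (use sub Eadj in \<open>blast intro: mset_subset_eqD\<close>)
    show "admissible_path n D p" unfolding admissible_path_def
      using w ends pP dgD by blast
  qed
  have upL: "all_up L = (\<Sum>c\<in>#z. upE c)"
  proof -
    have "all_up L = filter_mset (\<lambda>(u, v). u \<subset> v) (sum_list (map steps L))"
      by (simp add: all_up_def up_edges_def[abs_def] filter_mset_sum_list comp_def)
    also have "\<dots> = (\<Sum>c\<in>#z. filter_mset (\<lambda>(u, v). u \<subset> v) (ed c))"
      unfolding FL E_def by (rule filter_sum_mset)
    also have "\<dots> = (\<Sum>c\<in>#z. upE c)" by (rule sum_mset_cong') (use c_up[OF zC] in simp)
    finally show ?thesis .
  qed
  have dnL: "all_down L = (\<Sum>c\<in>#z. dnE c)"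
  proof -
    have "all_down L = image_mset (\<lambda>(u, v). (v, u)) (filter_mset (\<lambda>(u, v). v \<subset> u) (sum_list (map steps L)))"
      by (simp add: all_down_def down_edges_def[abs_def] filter_mset_sum_list comp_def image_mset_sum_list')
    also have "\<dots> = (\<Sum>c\<in>#z. image_mset (\<lambda>(u, v). (v, u)) (filter_mset (\<lambda>(u, v). v \<subset> u) (ed c)))"
      unfolding FL E_def by (simp add: filter_sum_mset image_sum_mset)
    also have "\<dots> = (\<Sum>c\<in>#z. dnE c)" by (rule sum_mset_cong') (use c_dn[OF zC] in simp)
    finally show ?thesis .
  qed
  have mt: "matched L"
    unfolding matched_def
  proof (intro exI[of _ M] conjI)
    show "image_mset fst M = all_up L" unfolding upL M_def image_sum_mset
      by (rule sum_mset_cong') (use c_fst[OF zC] in simp)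
    show "image_mset snd M = all_down L" unfolding dnL M_def image_sum_mset
      by (rule sum_mset_cong') (use c_snd[OF zC] in simp)
    show "\<forall>x\<in>#M. edge_le (fst x) (snd x)"
    proof
      fix x assume xM: "x \<in># M"
      obtain c where "c \<in># z" "x \<in># prE c" using in_sum_mset_image[of x prE z] xM unfolding M_def by blast
      then show "edge_le (fst x) (snd x)" using c_le[OF zC] by blast
    qed
  qed
  have val: "coll_value f L < 0"
  proof -
    have pv: "path_value f p = (\<Sum>e\<in>#steps p. f (snd e) - f (fst e))" if "p \<in> set L" for p
    proof -
      have "p \<noteq> []" using adm that by (auto simp: admissible_path_def hc_walk_def)
      then show ?thesis unfolding path_value_def using telescope[of p f] by auto
    qed
    have "coll_value f L = (\<Sum>p\<leftarrow>L. (\<Sum>e\<in>#steps p. f (snd e) - f (fst e)))"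
      unfolding coll_value_def by (intro arg_cong[where f=sum_list] map_cong) (auto simp: pv)
    also have "\<dots> = (\<Sum>e\<in>#E. f (snd e) - f (fst e))"
      by (simp add: sum_over_sum_list FL[symmetric])
    also have "\<dots> = (\<Sum>c\<in>#z. (\<Sum>e\<in>#ed c. f (snd e) - f (fst e)))"
      unfolding E_def by (rule sum_over_sum_mset)
    also have "\<dots> = (\<Sum>c\<in>#z. Bc f c - lin c f)" by (rule sum_mset_cong') (use c_val[OF zC] in simp)
    also have "\<dots> = rh (Bc f) z - (\<Sum>c\<in>#z. lin c f)" by (simp add: sum_mset_diff_real rh_def)
    also have "(\<Sum>c\<in>#z. lin c f) = (\<Sum>c\<in>#z. \<Sum>v\<in>Pow {..<n}. real_of_int (Ac c v) * f v)"
      by (rule sum_mset_cong') (use lin_sum[OF _ zC D order_refl] in simp)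
    also have "\<dots> = 0" unfolding swap_sums using z0(1) by simp
    finally show ?thesis using z0(2) by simp
  qed
  show ?thesis unfolding path_certificate_def using adm mt val by blast
qed

theorem lemma9:
  fixes n :: nat and D :: "nat set set" and f :: "nat set \<Rightarrow> real"
  assumes "D \<subseteq> Pow {..<n}"
  shows "\<not> submodular_extendable n D f \<longleftrightarrow> (\<exists>P. path_certificate n D f P)"
proof
  assume "\<not> submodular_extendable n D f"
  then show "\<exists>P. path_certificate n D f P" using hard[OF assms] by blast
next
  assume "\<exists>P. path_certificate n D f P"
  then obtain P where P: "path_certificate n D f P" by blast
  show "\<not> submodular_extendable n D f"
  proof
    assume "submodular_extendable n D f"
    then obtain g where "submodular_on n g" "\<forall>S\<in>D. g S = f S"
      by (auto simp: submodular_extendable_def)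
    then have "coll_value f P \<ge> 0" using easy P by (auto simp: path_certificate_def)
    then show False using P by (simp add: path_certificate_def)
  qed
qed


end
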